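(* Let $\boldsymbol{f}\in\mathbb{R}^E$ satisfy $\boldsymbol{u}^-_e<\boldsymbol{f}_e<\boldsymbol{u}^+_e$ for all $e$ and $\boldsymbol{c}^\top\boldsymbol{f}>F^*$. Let $\tilde{\boldsymbol{g}}\in\mathbb{R}^E$ satisfy $\|\mathbf{L}(\boldsymbol{f})^{-1}(\tilde{\boldsymbol{g}}-\boldsymbol{g}(\boldsymbol{f}))\|_\infty\le\kappa/8$ for some $\kappa\in(0,1)$, and $\tilde{\boldsymbol{\ell}}\in\mathbb{R}^E_{>0}$ satisfy $\tilde{\boldsymbol{\ell}}\approx_2\boldsymbol{\ell}(\boldsymbol{f})$. Let $\boldsymbol{\Delta}$ satisfy $\mathbf{B}^\top\boldsymbol{\Delta}=0$ and $\tilde{\boldsymbol{g}}^\top\boldsymbol{\Delta}/\|\tilde{\mathbf{L}}\boldsymbol{\Delta}\|_1\le-\kappa$, and let $\eta$ satisfy $\eta\,\tilde{\boldsymbol{g}}^\top\boldsymbol{\Delta}=-\kappa^2/50$. Then $\Phi(\boldsymbol{f}+\eta\boldsymbol{\Delta})\le\Phi(\boldsymbol{f})-\kappa^2/500$.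
   Context: Setting: $G=(V,E)$ is a directed graph with $m=|E|$ edges and edge-vertex incidence matrix $\mathbf{B}$ (row of edge $(a,b)$ has $+1$ at $a$, $-1$ at $b$); demands $\boldsymbol{d}\in\mathbb{Z}^V$, lower/upper capacities $\boldsymbol{u}^-,\boldsymbol{u}^+\in\mathbb{Z}^E$, and costs $\boldsymbol{c}\in\mathbb{Z}^E$ are integers bounded in absolute value by $U$. $F^*=\min\{\boldsymbol{c}^\top\boldsymbol{f}:\mathbf{B}^\top\boldsymbol{f}=\boldsymbol{d},\ \boldsymbol{u}^-\le\boldsymbol{f}\le\boldsymbol{u}^+\}$. Let $\alpha=1/(1000\log(mU))$ and $\Phi(\boldsymbol{f})=20m\log(\boldsymbol{c}^\top\boldsymbol{f}-F^* )+\sum_{e\in E}\big((\boldsymbol{u}^+_e-\boldsymbol{f}_e)^{-\alpha}+(\boldsymbol{f}_e-\boldsymbol{u}^-_e)^{-\alpha}\big)$. Lengths: $\boldsymbol{\ell}(\boldsymbol{f})_e=(\boldsymbol{u}^+_e-\boldsymbol{f}_e)^{-1-\alpha}+(\boldsymbol{f}_e-\boldsymbol{u}^-_e)^{-1-\alpha}$; gradients $\boldsymbol{g}(\boldsymbol{f})=\nabla\Phi(\boldsymbol{f})$, i.e. $\boldsymbol{g}(\boldsymbol{f})_e=20m(\boldsymbol{c}^\top\boldsymbol{f}-F^* )^{-1}\boldsymbol{c}_e+\alpha(\boldsymbol{u}^+_e-\boldsymbol{f}_e)^{-1-\alpha}-\alpha(\boldsymbol{f}_e-\boldsymbol{u}^-_e)^{-1-\alpha}$.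 $\mathbf{L}(\boldsymbol{f})=\mathrm{diag}(\boldsymbol{\ell}(\boldsymbol{f}))$, $\tilde{\mathbf{L}}=\mathrm{diag}(\tilde{\boldsymbol{\ell}})$. For positive vectors, $\boldsymbol{x}\approx_\beta\boldsymbol{y}$ means $\beta^{-1}\boldsymbol{y}_i\le\boldsymbol{x}_i\le\beta\boldsymbol{y}_i$ for all $i$. *)

theory Defs
  imports "HOL-Analysis.Analysis"
begin

text \<open>Directed (multi)graph: vertex set V, edge set E, each edge e goes from
  src e to tgt e.  Vectors in R^E / R^V are functions, only their values on E / V matter.\<close>

definition incid :: "('e \<Rightarrow> 'v) \<Rightarrow> ('e \<Rightarrow> 'v) \<Rightarrow> 'e \<Rightarrow> 'v \<Rightarrow> real" where
  "incid src tgt e v = (if src e = v then 1 else 0) - (if tgt e = v then 1 else 0)"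

definition BT :: "'e set \<Rightarrow> ('e \<Rightarrow> 'v) \<Rightarrow> ('e \<Rightarrow> 'v) \<Rightarrow> ('e \<Rightarrow> real) \<Rightarrow> 'v \<Rightarrow> real" where
  "BT E src tgt f v = (\<Sum>e\<in>E. incid src tgt e v * f e)"

definition cost :: "'e set \<Rightarrow> ('e \<Rightarrow> int) \<Rightarrow> ('e \<Rightarrow> real) \<Rightarrow> real" where
  "cost E c f = (\<Sum>e\<in>E. real_of_int (c e) * f e)"

definition Fstar :: "'v set \<Rightarrow> 'e set \<Rightarrow> ('e \<Rightarrow> 'v) \<Rightarrow> ('e \<Rightarrow> 'v) \<Rightarrow> ('v \<Rightarrow> int)
    \<Rightarrow> ('e \<Rightarrow> int) \<Rightarrow> ('e \<Rightarrow> int) \<Rightarrow> ('e \<Rightarrow> int) \<Rightarrow> real" where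
  "Fstar V E src tgt d lo up c =
     Inf {cost E c f | f. (\<forall>v\<in>V. BT E src tgt f v = real_of_int (d v)) \<and>
                          (\<forall>e\<in>E. real_of_int (lo e) \<le> f e \<and> f e \<le> real_of_int (up e))}"

definition alpha :: "nat \<Rightarrow> int \<Rightarrow> real" where
  "alpha m U = 1 / (1000 * ln (real m * real_of_int U))"

definition Phi :: "real \<Rightarrow> real \<Rightarrow> 'e set \<Rightarrow> ('e \<Rightarrow> int) \<Rightarrow> ('e \<Rightarrow> int) \<Rightarrow> ('e \<Rightarrow> int)
    \<Rightarrow> ('e \<Rightarrow> real) \<Rightarrow> real" where
  "Phi a Fs E lo up c f =
     20 * real (card E) * ln (cost E c f - Fs)
     + (\<Sum>e\<in>E. (real_of_int (up e) - f e) powr (-a) + (f e - real_of_int (lo e)) powr (-a))"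

definition lens :: "real \<Rightarrow> ('e \<Rightarrow> int) \<Rightarrow> ('e \<Rightarrow> int) \<Rightarrow> ('e \<Rightarrow> real) \<Rightarrow> 'e \<Rightarrow> real" where
  "lens a lo up f e =
     (real_of_int (up e) - f e) powr (-1 - a) + (f e - real_of_int (lo e)) powr (-1 - a)"

definition grad :: "real \<Rightarrow> real \<Rightarrow> 'e set \<Rightarrow> ('e \<Rightarrow> int) \<Rightarrow> ('e \<Rightarrow> int) \<Rightarrow> ('e \<Rightarrow> int)
    \<Rightarrow> ('e \<Rightarrow> real) \<Rightarrow> 'e \<Rightarrow> real" where
  "grad a Fs E lo up c f e =
     20 * real (card E) * real_of_int (c e) / (cost E c f - Fs)
     + a * (real_of_int (up e) - f e) powr (-1 - a)
     - a * (f e - real_of_int (lo e)) powr (-1 - a)"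

end

theory Submission
  imports Defs
begin

lemma bern_powr:
  fixes b a :: real
  assumes "b > 0" "0 \<le> a" "a \<le> 1"
  shows "b powr a \<le> 1 + a * (b - 1)"
  using Youngs_inequality_0[of a "1 - a" b 1] assms by (simp add: algebra_simps)

lemma barrier_step:
  fixes z t a :: real
  assumes z: "z > 0" and t: "\<bar>t\<bar> \<le> z / 10" and a: "0 \<le> a" "a \<le> 1"
  shows "(z - t) powr (-a) \<le> z powr (-a) + a * z powr (-1-a) * t + 2 * a * z powr (-2-a) * t^2"
proof -
  define s where "s = t / z"
  have s: "\<bar>s\<bar> \<le> 1/10" using t z by (simp add: s_def abs_divide divide_le_eq)
  have s1: "1 - s \<ge> 9/10" using s by linarith
  have zt: "z - t = z * (1 - s)" using z by (simp add: s_def field_simps)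
  have "(z - t) powr (-a) = z powr (-a) * (1 - s) powr (-a)"
    unfolding zt using z s1 by (simp add: powr_mult)
  moreover have F2: "(1 - s) powr (-a) = (1 / (1 - s)) powr a"
    using s1 by (simp add: powr_minus_divide powr_divide)
  moreover have F3: "(1 / (1 - s)) powr a \<le> 1 + a * (1 / (1 - s) - 1)"
    using bern_powr[of "1/(1-s)" a] s1 a by simp
  moreover have "1 / (1 - s) - 1 \<le> s + 2 * s^2"
  proof -
    have "1 / (1 - s) - 1 - s = s^2 / (1 - s)" using s1 by (simp add: field_simps power2_eq_square)
    also have "\<dots> \<le> 2 * s^2" using s1 proof -
      have "s^2 * 1 \<le> s^2 * (2 * (1 - s))" using s1 by (intro mult_left_mono) auto
      then show ?thesis using s1 by (simp add: divide_le_eq algebra_simps)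
    qed
    finally show ?thesis by simp
  qed
  ultimately have "(1 - s) powr (-a) \<le> 1 + a * (s + 2 * s^2)"
  proof -
    have "a * (1 / (1 - s) - 1) \<le> a * (s + 2 * s^2)"
      using a(1) \<open>1 / (1 - s) - 1 \<le> s + 2 * s^2\<close> by (intro mult_left_mono) auto
    then show ?thesis using F2 F3 by linarith
  qed
  then have "(z - t) powr (-a) \<le> z powr (-a) * (1 + a * (s + 2 * s^2))"
    using \<open>(z - t) powr (-a) = z powr (-a) * (1 - s) powr (-a)\<close> by (simp add: mult_left_mono)
  also have "\<dots> = z powr (-a) + a * (z powr (-a) / z) * t + 2 * a * (z powr (-a) / z^2) * t^2"
    using z by (simp add: s_def field_simps power2_eq_square)
  also have "z powr (-a) / z = z powr (-1-a)"
  proof -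
    have "z powr (-1-a) = z powr ((-1) + (-a))" by simp
    also have "\<dots> = z powr (-1) * z powr (-a)" by (rule powr_add)
    also have "z powr (-1) = 1 / z" using z by (simp add: powr_minus_divide)
    finally show ?thesis by simp
  qed
  also have "z powr (-a) / z^2 = z powr (-2-a)"
  proof -
    have "z powr (-2-a) = z powr ((-2) + (-a))" by simp
    also have "\<dots> = z powr (-2) * z powr (-a)" by (rule powr_add)
    also have "z powr (-2) = 1 / z^2" using z by (simp add: powr_minus_divide powr_numeral)
    finally show ?thesis by simp
  qed
  finally show ?thesis .
qed

theorem lemma4p4:
  fixes V :: "'v set" and E :: "'e set" and src tgt :: "'e \<Rightarrow> 'v"
    and d :: "'v \<Rightarrow> int" and lo up c :: "'e \<Rightarrow> int" and U :: int
    and f gt lt Delta :: "'e \<Rightarrow> real" and kappa eta :: real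
  assumes finV: "finite V" and finE: "finite E"
    and ends: "\<forall>e\<in>E. src e \<in> V \<and> tgt e \<in> V"
    and bd_d: "\<forall>v\<in>V. \<bar>d v\<bar> \<le> U"
    and bd_lo: "\<forall>e\<in>E. \<bar>lo e\<bar> \<le> U" and bd_up: "\<forall>e\<in>E. \<bar>up e\<bar> \<le> U"
    and bd_c: "\<forall>e\<in>E. \<bar>c e\<bar> \<le> U"
    and f_int: "\<forall>e\<in>E. real_of_int (lo e) < f e \<and> f e < real_of_int (up e)"
    and f_gap: "cost E c f > Fstar V E src tgt d lo up c"
    and kappa: "0 < kappa" "kappa < 1"
    and gt: "\<forall>e\<in>E. \<bar>gt e - grad (alpha (card E) U) (Fstar V E src tgt d lo up c) E lo up c f e\<bar>
                      / lens (alpha (card E) U) lo up f e \<le> kappa / 8"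
    and lt_pos: "\<forall>e\<in>E. lt e > 0"
    and lt_approx: "\<forall>e\<in>E. lens (alpha (card E) U) lo up f e / 2 \<le> lt e \<and>
                           lt e \<le> 2 * lens (alpha (card E) U) lo up f e"
    and circ: "\<forall>v\<in>V. BT E src tgt Delta v = 0"
    and ratio: "(\<Sum>e\<in>E. gt e * Delta e) / (\<Sum>e\<in>E. \<bar>lt e * Delta e\<bar>) \<le> - kappa"
    and eta: "eta * (\<Sum>e\<in>E. gt e * Delta e) = - (kappa^2 / 50)"
  shows "Phi (alpha (card E) U) (Fstar V E src tgt d lo up c) E lo up c (\<lambda>e. f e + eta * Delta e)
         \<le> Phi (alpha (card E) U) (Fstar V E src tgt d lo up c) E lo up c f - kappa^2 / 500"
  proof -
  define m where "m = card E"
  define a where "a = alpha (card E) U"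
  define Fs where "Fs = Fstar V E src tgt d lo up c"
  define G where "G = cost E c f - Fs"
  define l where "l = lens a lo up f"
  define x where "x = (\<lambda>e. real_of_int (up e) - f e)"
  define y where "y = (\<lambda>e. f e - real_of_int (lo e))"
  define dl where "dl = (\<lambda>e. eta * Delta e)"
  define S where "S = (\<Sum>e\<in>E. gt e * Delta e)"
  define D where "D = (\<Sum>e\<in>E. \<bar>lt e * Delta e\<bar>)"
  define R where "R = (\<Sum>e\<in>E. l e * \<bar>dl e\<bar>)"
  have G: "G > 0" using f_gap by (simp add: G_def Fs_def)
  have D0: "D \<ge> 0" unfolding D_def by (simp add: sum_nonneg)
  have Dpos: "D > 0"
  proof (rule ccontr)
    assume "\<not> D > 0" then have "D = 0" using D0 by simp
    then show False using ratio kappa by (simp add: D_def)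
  qed
  have Ene: "E \<noteq> {}" using Dpos by (auto simp: D_def)
  have m1: "m \<ge> 1" using Ene finE by (simp add: m_def Suc_le_eq card_gt_0_iff)
  have SD: "S \<le> - kappa * D" using ratio Dpos by (simp add: S_def D_def divide_le_eq)
  have "kappa * D > 0" using kappa Dpos by simp
  then have Sneg: "S < 0" using SD by linarith
  have etaS: "eta * S = - (kappa^2/50)" using eta by (simp add: S_def)
  have etapos: "eta > 0"
  proof (rule ccontr)
    assume "\<not> eta > 0" then have "eta * S \<ge> 0" using Sneg by (simp add: mult_nonpos_nonpos)
    moreover have "kappa^2 > 0" using kappa by simp
    ultimately show False using etaS by linarith
  qed
  have "kappa * (eta * D) \<le> eta * (- S)"
  proof -
    have "eta * (kappa * D) \<le> eta * (- S)" using SD etapos by (intro mult_left_mono) auto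
    then show ?thesis by (simp add: algebra_simps)
  qed
  also have "\<dots> = kappa * (kappa / 50)" using etaS by (simp add: power2_eq_square)
  finally have etaD: "eta * D \<le> kappa / 50" using kappa by simp
  have lpos: "\<forall>e\<in>E. l e > 0"
  proof
    fix e assume e: "e \<in> E"
    then have "real_of_int (up e) - f e \<noteq> 0" "f e - real_of_int (lo e) \<noteq> 0" using f_int by auto
    then show "l e > 0" unfolding l_def lens_def by (intro add_pos_pos) auto
  qed
  have xpos: "\<forall>e\<in>E. x e > 0" and ypos: "\<forall>e\<in>E. y e > 0" using f_int by (auto simp: x_def y_def)
  have Rle: "R \<le> kappa / 25"
  proof -
    have "R \<le> (\<Sum>e\<in>E. 2 * (eta * \<bar>lt e * Delta e\<bar>))"
      unfolding R_def
    proof (rule sum_mono)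
      fix e assume e: "e \<in> E"
      have "l e * \<bar>dl e\<bar> \<le> (2 * lt e) * \<bar>dl e\<bar>"
        using lt_approx e by (intro mult_right_mono) (auto simp: l_def a_def)
      also have "\<dots> = 2 * (eta * \<bar>lt e * Delta e\<bar>)"
        using etapos lt_pos e by (simp add: dl_def abs_mult abs_of_pos)
      finally show "l e * \<bar>dl e\<bar> \<le> 2 * (eta * \<bar>lt e * Delta e\<bar>)" .
    qed
    also have "\<dots> = 2 * (eta * D)" by (simp add: D_def sum_distrib_left)
    finally show ?thesis using etaD by simp
  qed
  have R0: "\<forall>e\<in>E. 0 \<le> l e * \<bar>dl e\<bar>" using lpos by (auto intro: mult_nonneg_nonneg less_imp_le)
  have Re: "\<forall>e\<in>E. l e * \<bar>dl e\<bar> \<le> R"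
    unfolding R_def using R0 finE by (intro ballI member_le_sum) auto
  obtain e0 where e0: "e0 \<in> E" using Ene by auto
  have "lo e0 < up e0" using f_int e0 by (metis of_int_less_iff order.strict_trans)
  moreover have "\<bar>lo e0\<bar> \<le> U" "\<bar>up e0\<bar> \<le> U" using bd_lo bd_up e0 by auto
  ultimately have U1: "U \<ge> 1" by arith
  have a_facts: "0 \<le> a \<and> a \<le> 1 \<and> a * ln (2 * real_of_int U) \<le> 1/500"
  proof (cases "real m * real_of_int U = 1")
    case True then show ?thesis by (simp add: a_def alpha_def m_def[symmetric])
  next
    case False
    have im: "int m \<ge> 1" using m1 by simp
    have g1: "1 * 1 \<le> int m * U" using im U1 by (intro mult_mono) auto
    have eqc: "real m * real_of_int U = real_of_int (int m * U)" by simp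
    have n1: "int m * U \<noteq> 1"
    proof
      assume "int m * U = 1"
      then have "real_of_int (int m * U) = 1" by simp
      then show False using False eqc by linarith
    qed
    have "int m * U \<ge> 2" using g1 n1 by linarith
    then have mU2: "real m * real_of_int U \<ge> 2" using eqc
      by (metis of_int_le_iff of_int_numeral)
    have ln2: "ln (2::real) \<ge> 1/2"
    proof -
      have "ln (1/2::real) \<le> 1/2 - 1" by (rule ln_le_minus_one) simp
      then show ?thesis by (simp add: ln_div)
    qed
    have L: "ln (real m * real_of_int U) \<ge> 1/2"
      proof -
      have "ln 2 \<le> ln (real m * real_of_int U)" using mU2 by simp
      then show ?thesis using ln2 by linarith
    qed
    have a_eq: "a = 1 / (1000 * ln (real m * real_of_int U))" by (simp add: a_def alpha_def m_def)
    have "2 * real_of_int U \<le> (real m * real_of_int U)^2"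
    proof -
      have "2 * real_of_int U \<le> (real m * real_of_int U) * real_of_int U" using mU2 U1 by simp
      also have "\<dots> \<le> (real m * real_of_int U) * (real m * real_of_int U)"
        using m1 U1 mU2 by (intro mult_left_mono) auto
      finally show ?thesis by (simp add: power2_eq_square)
    qed
    moreover have "0 < 2 * real_of_int U" "0 < (real m * real_of_int U)^2" using U1 mU2 m1 by auto
    ultimately have "ln (2 * real_of_int U) \<le> ln ((real m * real_of_int U)^2)" by (simp only: ln_le_cancel_iff)
    also have "\<dots> = 2 * ln (real m * real_of_int U)" using mU2 by (simp add: ln_realpow)
    finally have l2: "ln (2 * real_of_int U) \<le> 2 * ln (real m * real_of_int U)" .
    have "a * ln (2 * real_of_int U) \<le> a * (2 * ln (real m * real_of_int U))"
      using l2 L a_eq by (intro mult_left_mono) auto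
    also have "\<dots> = 1/500" using L a_eq by simp
    finally show ?thesis using L a_eq by (simp add: divide_le_eq)
  qed
  have a0: "0 \<le> a" and a1: "a \<le> 1" using a_facts by auto
  have powa: "z powr a \<le> 2" if "0 < z" "z \<le> 2 * real_of_int U" for z
  proof -
    have "z powr a \<le> (2 * real_of_int U) powr a" using that a0 by (intro powr_mono2) auto
    also have "\<dots> = exp (a * ln (2 * real_of_int U))" using U1 by (simp add: powr_def)
    also have "\<dots> \<le> exp (1/2)" using a_facts by simp
    also have "\<dots> \<le> 2" using exp_bound_half[of "1/2::real"] by simp
    finally show ?thesis .
  qed
  have xy2U: "x e \<le> 2 * real_of_int U \<and> y e \<le> 2 * real_of_int U" if e: "e \<in> E" for e
  proof -
    have "\<bar>lo e\<bar> \<le> U" "\<bar>up e\<bar> \<le> U" using bd_lo bd_up e by auto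
    then have "real_of_int (lo e) \<ge> - real_of_int U" "real_of_int (up e) \<le> real_of_int U" by linarith+
    then show ?thesis using f_int e unfolding x_def y_def by auto
  qed
  have x2U: "\<forall>e\<in>E. x e \<le> 2 * real_of_int U" and y2U: "\<forall>e\<in>E. y e \<le> 2 * real_of_int U"
    using xy2U by auto
  have l_eq: "\<forall>e\<in>E. l e = x e powr (-1-a) + y e powr (-1-a)" by (simp add: l_def lens_def x_def y_def)
  have zfacts: "\<bar>t\<bar> \<le> z / 10 \<and> z powr (-2-a) * t^2 \<le> 2 * L^2"
    if z: "0 < z" "z \<le> 2 * real_of_int U" and zL: "z powr (-1-a) * \<bar>t\<bar> \<le> L" and L: "L \<le> 1/25" for z t L
  proof -
    have pa: "z powr a \<le> 2" using powa z by simp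
    have L0: "0 \<le> z powr (-1-a) * \<bar>t\<bar>" by simp
    have t_eq: "\<bar>t\<bar> = (z powr (-1-a) * \<bar>t\<bar>) * (z * z powr a)"
      using z by (simp add: powr_add[symmetric] powr_minus_divide[symmetric] algebra_simps)
    also have "\<dots> \<le> (1/25) * (z * 2)"
      using zL L z pa L0 by (intro mult_mono) auto
    finally have t1: "\<bar>t\<bar> \<le> z / 10" by simp
    have "z powr (-2-a) * t^2 = (z powr (-1-a) * \<bar>t\<bar>)^2 * z powr a"
    proof -
      have "z powr (-2-a) = (z powr (-1-a))^2 * z powr a"
      proof -
        have "(z powr (-1-a))^2 * z powr a = z powr ((-1-a) + (-1-a) + a)"
          by (simp only: power2_eq_square flip: powr_add)
        also have "(-1-a) + (-1-a) + a = -2-a" by simp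
        finally show ?thesis by simp
      qed
      then show ?thesis by (simp add: power2_eq_square)
    qed
    also have "\<dots> \<le> L^2 * 2" using zL L0 pa by (intro mult_mono power_mono) auto
    finally show ?thesis using t1 by simp
  qed
  have edge: "(x e - dl e) powr (-a) + (y e + dl e) powr (-a) \<le>
      x e powr (-a) + y e powr (-a) + (a * x e powr (-1-a) - a * y e powr (-1-a)) * dl e
      + 8 * a * (l e * \<bar>dl e\<bar>)^2" if e: "e \<in> E" for e
  proof -
    have "l e * \<bar>dl e\<bar> \<le> R" using Re e by blast
    then have L: "l e * \<bar>dl e\<bar> \<le> 1/25" using Rle kappa by linarith
    have xl: "x e powr (-1-a) * \<bar>dl e\<bar> \<le> l e * \<bar>dl e\<bar>"
      using l_eq e by (intro mult_right_mono) auto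
    have yl: "y e powr (-1-a) * \<bar>dl e\<bar> \<le> l e * \<bar>dl e\<bar>"
      using l_eq e by (intro mult_right_mono) auto
    have X: "\<bar>dl e\<bar> \<le> x e / 10 \<and> x e powr (-2-a) * (dl e)^2 \<le> 2 * (l e * \<bar>dl e\<bar>)^2"
      using zfacts[OF _ _ xl L] xpos x2U e by auto
    have Y: "\<bar>- dl e\<bar> \<le> y e / 10 \<and> y e powr (-2-a) * (- dl e)^2 \<le> 2 * (l e * \<bar>dl e\<bar>)^2"
      using zfacts[OF _ _ yl L] ypos y2U e by auto
    have bx: "(x e - dl e) powr (-a) \<le> x e powr (-a) + a * x e powr (-1-a) * dl e + 2 * a * x e powr (-2-a) * (dl e)^2"
      using barrier_step[of "x e" "dl e" a] X xpos e a0 a1 by auto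
    have by': "(y e - (- dl e)) powr (-a) \<le> y e powr (-a) + a * y e powr (-1-a) * (- dl e) + 2 * a * y e powr (-2-a) * (- dl e)^2"
      using barrier_step[of "y e" "- dl e" a] Y ypos e a0 a1 by auto
    have X2: "x e powr (-2-a) * (dl e)^2 \<le> 2 * (l e * \<bar>dl e\<bar>)^2" using X by simp
    have rx: "2 * a * x e powr (-2-a) * (dl e)^2 \<le> 2 * a * (2 * (l e * \<bar>dl e\<bar>)^2)"
    proof -
      have "2 * a * (x e powr (-2-a) * (dl e)^2) \<le> 2 * a * (2 * (l e * \<bar>dl e\<bar>)^2)"
        using X2 a0 by (intro mult_left_mono) auto
      then show ?thesis by (simp only: mult.assoc)
    qed
    have Y2: "y e powr (-2-a) * (dl e)^2 \<le> 2 * (l e * \<bar>dl e\<bar>)^2" using Y by simp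
    have ry: "2 * a * y e powr (-2-a) * (dl e)^2 \<le> 2 * a * (2 * (l e * \<bar>dl e\<bar>)^2)"
    proof -
      have "2 * a * (y e powr (-2-a) * (dl e)^2) \<le> 2 * a * (2 * (l e * \<bar>dl e\<bar>)^2)"
        using Y2 a0 by (intro mult_left_mono) auto
      then show ?thesis by (simp only: mult.assoc)
    qed
    have by2: "(y e + dl e) powr (-a) \<le> y e powr (-a) - a * y e powr (-1-a) * dl e + 2 * a * y e powr (-2-a) * (dl e)^2"
      using by' by simp
    have dist: "(a * x e powr (-1-a) - a * y e powr (-1-a)) * dl e = a * x e powr (-1-a) * dl e - a * y e powr (-1-a) * dl e"
      by (simp add: algebra_simps)
    show ?thesis using bx by2 rx ry dist by linarith
  qed
  define bg where "bg = (\<lambda>e. a * x e powr (-1-a) - a * y e powr (-1-a))"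
  define C where "C = (\<Sum>e\<in>E. real_of_int (c e) * dl e)"
  define gr where "gr = grad a Fs E lo up c f"
  have gr_eq: "\<forall>e\<in>E. gr e = 20 * real m * real_of_int (c e) / G + bg e"
    by (simp add: gr_def grad_def bg_def G_def x_def y_def m_def)
  have sum_gr: "(\<Sum>e\<in>E. gr e * dl e) = 20 * real m / G * C + (\<Sum>e\<in>E. bg e * dl e)"
  proof -
    have "(\<Sum>e\<in>E. gr e * dl e) = (\<Sum>e\<in>E. 20 * real m / G * (real_of_int (c e) * dl e) + bg e * dl e)"
      using gr_eq by (intro sum.cong) (auto simp: algebra_simps)
    then show ?thesis by (simp add: sum.distrib C_def sum_distrib_left)
  qed
  have sum_gt: "(\<Sum>e\<in>E. gt e * dl e) = - (kappa^2/50)"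
    using etaS by (simp add: S_def dl_def sum_distrib_left algebra_simps)
  have diff: "\<bar>\<Sum>e\<in>E. (gr e - gt e) * dl e\<bar> \<le> kappa / 8 * R"
  proof -
    have "\<bar>\<Sum>e\<in>E. (gr e - gt e) * dl e\<bar> \<le> (\<Sum>e\<in>E. \<bar>(gr e - gt e) * dl e\<bar>)" by (rule sum_abs)
    also have "\<dots> \<le> (\<Sum>e\<in>E. kappa / 8 * (l e * \<bar>dl e\<bar>))"
    proof (rule sum_mono)
      fix e assume e: "e \<in> E"
      have "\<bar>gt e - gr e\<bar> / l e \<le> kappa / 8" using gt e by (simp add: gr_def l_def a_def Fs_def)
      then have "\<bar>gr e - gt e\<bar> \<le> kappa / 8 * l e" using lpos e by (simp add: divide_le_eq abs_minus_commute)
      then have "\<bar>gr e - gt e\<bar> * \<bar>dl e\<bar> \<le> (kappa / 8 * l e) * \<bar>dl e\<bar>"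
        by (intro mult_right_mono) auto
      then show "\<bar>(gr e - gt e) * dl e\<bar> \<le> kappa / 8 * (l e * \<bar>dl e\<bar>)"
        by (simp only: abs_mult mult.assoc)
    qed
    also have "\<dots> = kappa / 8 * R" by (simp add: R_def sum_distrib_left)
    finally show ?thesis .
  qed
  have split_gr: "(\<Sum>e\<in>E. gr e * dl e) = (\<Sum>e\<in>E. gt e * dl e) + (\<Sum>e\<in>E. (gr e - gt e) * dl e)"
    by (simp add: sum.distrib[symmetric] algebra_simps)
  have kR: "kappa / 8 * R \<le> kappa^2 / 200"
  proof -
    have "kappa / 8 * R \<le> kappa / 8 * (kappa / 25)" using Rle kappa by (intro mult_left_mono) auto
    then show ?thesis by (simp add: power2_eq_square)
  qed
  have gr_up: "(\<Sum>e\<in>E. gr e * dl e) \<le> - (kappa^2/50) + kappa^2/200"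
    using split_gr sum_gt diff kR by linarith
  have gr_lo: "(\<Sum>e\<in>E. gr e * dl e) \<ge> - (kappa^2/50) - kappa^2/200"
    using split_gr sum_gt diff kR by linarith
  have bg_abs: "\<bar>\<Sum>e\<in>E. bg e * dl e\<bar> \<le> R"
  proof -
    have "\<bar>\<Sum>e\<in>E. bg e * dl e\<bar> \<le> (\<Sum>e\<in>E. \<bar>bg e * dl e\<bar>)" by (rule sum_abs)
    also have "\<dots> \<le> (\<Sum>e\<in>E. l e * \<bar>dl e\<bar>)"
    proof (rule sum_mono)
      fix e assume e: "e \<in> E"
      have p1: "0 \<le> x e powr (-1-a)" and p2: "0 \<le> y e powr (-1-a)" by auto
      have q1: "0 \<le> a * x e powr (-1-a)" and q2: "0 \<le> a * y e powr (-1-a)" using a0 p1 p2 by auto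
      have "a * l e = a * x e powr (-1-a) + a * y e powr (-1-a)" using l_eq e by (simp add: algebra_simps)
      then have "\<bar>bg e\<bar> \<le> a * l e"
        using q1 q2 unfolding bg_def by (simp only: abs_le_iff) linarith
      also have "\<dots> \<le> l e" using a1 lpos e by (simp add: mult_le_cancel_right1)
      finally show "\<bar>bg e * dl e\<bar> \<le> l e * \<bar>dl e\<bar>" by (simp add: abs_mult mult_right_mono)
    qed
    finally show ?thesis by (simp add: R_def)
  qed
  have kap2: "kappa^2 \<le> 1" using kappa by (simp add: abs_square_le_1)
  have "20 * real m / G * C \<ge> - 1/10"
    using sum_gr gr_lo bg_abs Rle kappa kap2 by linarith
  then have "20 * real m * C \<ge> - G / 10" using G by (simp add: divide_simps mult.commute) 
  moreover have "real m \<ge> 1" using m1 by simp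
  ultimately have GC: "G + C > 0"
  proof (cases "C \<ge> 0")
    case True then show ?thesis using G by linarith
  next
    case False
    have "real m * C \<le> 1 * C" using \<open>real m \<ge> 1\<close> False by (intro mult_right_mono_neg) auto
    then show ?thesis using \<open>20 * real m * C \<ge> - G / 10\<close> G by linarith
  qed
  have lnb: "ln (G + C) \<le> ln G + C / G"
  proof -
    have "ln ((G + C) / G) \<le> (G + C) / G - 1" using GC G by (intro ln_le_minus_one) simp
    then show ?thesis using GC G by (simp add: ln_div field_simps)
  qed
  have cost_new: "cost E c (\<lambda>e. f e + eta * Delta e) - Fs = G + C"
    by (simp add: cost_def G_def C_def dl_def algebra_simps sum.distrib)
  have rem: "(\<Sum>e\<in>E. 8 * a * (l e * \<bar>dl e\<bar>)^2) \<le> 8 * kappa^2 / 625"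
  proof -
    have "(\<Sum>e\<in>E. 8 * a * (l e * \<bar>dl e\<bar>)^2) \<le> (\<Sum>e\<in>E. 8 * (kappa / 25) * (l e * \<bar>dl e\<bar>))"
    proof (rule sum_mono)
      fix e assume e: "e \<in> E"
      have r1: "l e * \<bar>dl e\<bar> \<le> kappa/25" using Re Rle e by fastforce
      have r0: "0 \<le> l e * \<bar>dl e\<bar>" using R0 e by blast
      have "(l e * \<bar>dl e\<bar>) * (l e * \<bar>dl e\<bar>) \<le> (kappa/25) * (l e * \<bar>dl e\<bar>)"
        using r1 r0 by (rule mult_right_mono)
      then have "(l e * \<bar>dl e\<bar>)^2 \<le> (kappa/25) * (l e * \<bar>dl e\<bar>)"
        by (simp only: power2_eq_square)
      moreover have "8 * a * (l e * \<bar>dl e\<bar>)^2 \<le> 8 * (l e * \<bar>dl e\<bar>)^2"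
        using a0 a1 by (simp add: mult_right_mono)
      ultimately show "8 * a * (l e * \<bar>dl e\<bar>)^2 \<le> 8 * (kappa / 25) * (l e * \<bar>dl e\<bar>)" by simp
    qed
    also have "\<dots> = 8 * (kappa / 25) * R" by (simp add: R_def sum_distrib_left)
    also have "\<dots> \<le> 8 * (kappa / 25) * (kappa / 25)" using Rle kappa by (intro mult_left_mono) auto
    finally show ?thesis by (simp add: power2_eq_square)
  qed
  have barrier: "(\<Sum>e\<in>E. (x e - dl e) powr (-a) + (y e + dl e) powr (-a)) \<le>
      (\<Sum>e\<in>E. x e powr (-a) + y e powr (-a)) + (\<Sum>e\<in>E. bg e * dl e) + (\<Sum>e\<in>E. 8 * a * (l e * \<bar>dl e\<bar>)^2)"
  proof -
    have "(\<Sum>e\<in>E. (x e - dl e) powr (-a) + (y e + dl e) powr (-a)) \<le>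
      (\<Sum>e\<in>E. (x e powr (-a) + y e powr (-a)) + bg e * dl e + 8 * a * (l e * \<bar>dl e\<bar>)^2)"
      using edge by (intro sum_mono) (simp add: bg_def)
    then show ?thesis by (simp add: sum.distrib)
  qed
  have PhiN: "Phi a Fs E lo up c (\<lambda>e. f e + eta * Delta e) =
      20 * real m * ln (G + C) + (\<Sum>e\<in>E. (x e - dl e) powr (-a) + (y e + dl e) powr (-a))"
    unfolding Phi_def cost_new by (simp add: x_def y_def dl_def m_def algebra_simps)
  have PhiO: "Phi a Fs E lo up c f = 20 * real m * ln G + (\<Sum>e\<in>E. x e powr (-a) + y e powr (-a))"
    unfolding Phi_def by (simp add: x_def y_def m_def G_def)
  have lnm: "20 * real m * ln (G + C) \<le> 20 * real m * ln G + 20 * real m / G * C"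
  proof -
    have "20 * real m * ln (G + C) \<le> 20 * real m * (ln G + C / G)" using lnb by (intro mult_left_mono) auto
    then show ?thesis by (simp add: algebra_simps)
  qed
  have "Phi a Fs E lo up c (\<lambda>e. f e + eta * Delta e) \<le> Phi a Fs E lo up c f + (\<Sum>e\<in>E. gr e * dl e) + 8 * kappa^2 / 625"
    using PhiN PhiO lnm barrier rem sum_gr by linarith
  also have "\<dots> \<le> Phi a Fs E lo up c f - kappa^2 / 500"
    using gr_up zero_le_power2[of kappa] by linarith
  finally show ?thesis unfolding a_def Fs_def .
qed

end
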